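(* For all $d\ge1$, $\alpha>1$, positive weights $\boldsymbol\gamma=\{\gamma_u\}$ with $\gamma_\emptyset=1$, and $M>0$, the index set $\mathcal A_d(M)$ satisfies $$|\mathcal A_d(M)|\le M^q\,C_{1,d,q,\alpha,\boldsymbol\gamma}\qquad\text{for all }q>\tfrac1\alpha,\qquad C_{1,d,q,\alpha,\boldsymbol\gamma}:=\sum_{u\subseteq\{1:d\}}\gamma_u^q[2\zeta(\alpha q)]^{|u|}.$$ Moreover, if $M\ge1$ then $|\mathcal A_d(M)|\ge(\gamma_{\{1\}}M)^{1/\alpha}$.
   Context: $\{1:d\}=\{1,\ldots,d\}$; $\zeta$ is the Riemann zeta function. Weights $\gamma_u>0$ for finite $u\subset\mathbb N$, $\gamma_\emptyset=1$. For $\mathbf h\in\mathbb Z^d$, $\mathrm{supp}(\mathbf h)=\{j:h_j\ne0\}$, $r(\mathbf h)=\gamma_{\mathrm{supp}(\mathbf h)}^{-1}\prod_{j\in\mathrm{supp}(\mathbf h)}|h_j|^\alpha$ (so $r(\mathbf0)=1$), and $\mathcal A_d(M)=\{\mathbf h\in\mathbb Z^d:r(\mathbf h)\le M\}$. *)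

theory Defs
  imports "HOL-Analysis.Analysis"
begin

definition zeta :: "real \<Rightarrow> real" where
  "zeta s = (\<Sum>n. 1 / (real (Suc n)) powr s)"

text \<open>Integer vectors in Z^d, represented as functions nat => int supported in {1..d}.\<close>
definition intvecs :: "nat \<Rightarrow> (nat \<Rightarrow> int) set" where
  "intvecs d = {h. \<forall>j. j \<notin> {1..d} \<longrightarrow> h j = 0}"

definition supp :: "(nat \<Rightarrow> int) \<Rightarrow> nat set" where
  "supp h = {j. h j \<noteq> 0}"

definition rfun :: "(nat set \<Rightarrow> real) \<Rightarrow> real \<Rightarrow> (nat \<Rightarrow> int) \<Rightarrow> real" where
  "rfun \<gamma> \<alpha> h = inverse (\<gamma> (supp h)) * (\<Prod>j\<in>supp h. \<bar>real_of_int (h j)\<bar> powr \<alpha>)"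

definition index_set :: "nat \<Rightarrow> (nat set \<Rightarrow> real) \<Rightarrow> real \<Rightarrow> real \<Rightarrow> (nat \<Rightarrow> int) set" where
  "index_set d \<gamma> \<alpha> M = {h \<in> intvecs d. rfun \<gamma> \<alpha> h \<le> M}"

definition C1 :: "nat \<Rightarrow> real \<Rightarrow> real \<Rightarrow> (nat set \<Rightarrow> real) \<Rightarrow> real" where
  "C1 d q \<alpha> \<gamma> = (\<Sum>u\<in>Pow {1..d}. \<gamma> u powr q * (2 * zeta (\<alpha> * q)) ^ card u)"

end

theory Submission imports Defs begin

lemma zeta_summable:
  assumes "s > 1" shows "summable (\<lambda>n. 1 / real (Suc n) powr s)"
proof -
  have "summable (\<lambda>n. real n powr (-s))" using assms summable_real_powr_iff by simp
  then have "summable (\<lambda>n. real (Suc n) powr (-s))" using summable_Suc_iff[of "\<lambda>n. real n powr (-s)"] by simp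
  then show ?thesis by (simp add: powr_minus_divide)
qed

lemma partial_zeta:
  assumes "s > 1" shows "(\<Sum>n\<in>{1..N}. 1 / real n powr s) \<le> zeta s"
proof -
  have "(\<Sum>n\<in>{1..N}. 1 / real n powr s) = (\<Sum>n<N. 1 / real (Suc n) powr s)"
    by (simp add: sum.atLeast1_atMost_eq)
  also have "\<dots> \<le> zeta s" unfolding zeta_def
    by (rule sum_le_suminf[OF zeta_summable[OF assms]]) auto
  finally show ?thesis .
qed

definition KK :: "nat \<Rightarrow> int set" where
  "KK N = int ` {1..N} \<union> (\<lambda>n. - int n) ` {1..N}"

lemma KK_finite: "finite (KK N)" by (simp add: KK_def)

lemma KK_mem: "k \<noteq> 0 \<Longrightarrow> \<bar>k\<bar> \<le> int N \<Longrightarrow> k \<in> KK N"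
  unfolding KK_def
proof -
  assume "k \<noteq> 0" "\<bar>k\<bar> \<le> int N"
  then show "k \<in> int ` {1..N} \<union> (\<lambda>n. - int n) ` {1..N}"
  proof (cases "k > 0")
    case True
    then have "k = int (nat k)" "nat k \<in> {1..N}" using \<open>\<bar>k\<bar> \<le> int N\<close> by auto
    then show ?thesis by blast
  next
    case False
    then have "k = - int (nat (-k))" "nat (-k) \<in> {1..N}" using \<open>\<bar>k\<bar> \<le> int N\<close> \<open>k \<noteq> 0\<close> by auto
    then show ?thesis by blast
  qed
qed

lemma KK_sum:
  assumes "s > 1" shows "(\<Sum>k\<in>KK N. \<bar>real_of_int k\<bar> powr (-s)) \<le> 2 * zeta s"
proof -
  have disj: "int ` {1..N} \<inter> (\<lambda>n. - int n) ` {1..N} = {}" by auto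
  have "(\<Sum>k\<in>KK N. \<bar>real_of_int k\<bar> powr (-s)) =
     (\<Sum>k\<in>int ` {1..N}. \<bar>real_of_int k\<bar> powr (-s)) + (\<Sum>k\<in>(\<lambda>n. - int n) ` {1..N}. \<bar>real_of_int k\<bar> powr (-s))"
    unfolding KK_def by (rule sum.union_disjoint) (use disj in auto)
  also have "\<dots> = 2 * (\<Sum>n\<in>{1..N}. 1 / real n powr s)"
    by (subst sum.reindex, simp add: inj_on_def)+ (simp add: powr_minus_divide)
  also have "\<dots> \<le> 2 * zeta s" using partial_zeta[OF assms] by simp
  finally show ?thesis .
qed

lemma supp_intvecs: "h \<in> intvecs d \<Longrightarrow> supp h \<subseteq> {1..d}"
  by (auto simp: intvecs_def supp_def)

lemma rfun_pos:
  assumes "h \<in> intvecs d" and "\<And>u. finite u \<Longrightarrow> u \<subseteq> {1..} \<Longrightarrow> \<gamma> u > 0"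
  shows "rfun \<gamma> \<alpha> h > 0" "\<gamma> (supp h) > 0"
proof -
  have s: "supp h \<subseteq> {1..d}" using supp_intvecs[OF assms(1)] .
  then have "finite (supp h)" by (rule finite_subset) simp
  moreover have "supp h \<subseteq> {1..}" using s by auto
  ultimately show g: "\<gamma> (supp h) > 0" using assms(2) by blast
  have "(\<Prod>j\<in>supp h. \<bar>real_of_int (h j)\<bar> powr \<alpha>) > 0"
    by (rule prod_pos) (auto simp: supp_def)
  then show "rfun \<gamma> \<alpha> h > 0" unfolding rfun_def using g by simp
qed

lemma coord_bound:
  assumes "h \<in> index_set d \<gamma> \<alpha> M" and "j \<in> supp h" and "\<alpha> > 0"
    and "\<And>u. finite u \<Longrightarrow> u \<subseteq> {1..} \<Longrightarrow> \<gamma> u > 0"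
  shows "\<bar>h j\<bar> \<le> int (nat \<lceil>(Max (\<gamma> ` Pow {1..d}) * M) powr (1 / \<alpha>)\<rceil>)"
proof -
  let ?G = "Max (\<gamma> ` Pow {1..d})"
  have hI: "h \<in> intvecs d" and hr: "rfun \<gamma> \<alpha> h \<le> M" using assms(1) by (auto simp: index_set_def)
  have s: "supp h \<subseteq> {1..d}" using supp_intvecs[OF hI] .
  have fin: "finite (supp h)" using s by (rule finite_subset) simp
  have gpos: "\<gamma> (supp h) > 0" using rfun_pos(2)[where \<gamma>=\<gamma>, OF hI assms(4)] by simp
  have gG: "\<gamma> (supp h) \<le> ?G" using s by (intro Max_ge) auto
  let ?f = "\<lambda>i. \<bar>real_of_int (h i)\<bar> powr \<alpha>"
  have "(\<Prod>i\<in>supp h. ?f i) = ?f j * (\<Prod>i\<in>supp h - {j}. ?f i)"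
    using fin assms(2) by (simp add: prod.remove)
  also have "\<dots> \<ge> ?f j"
  proof -
    have "(\<Prod>i\<in>supp h - {j}. ?f i) \<ge> 1"
      by (rule prod_ge_1) (auto simp: supp_def intro!: ge_one_powr_ge_zero less_imp_le[OF assms(3)])
    moreover have "?f j \<ge> 0" by simp
    ultimately show ?thesis by (metis mult_left_mono mult.right_neutral)
  qed
  finally have "?f j \<le> (\<Prod>i\<in>supp h. ?f i)" .
  also have "(\<Prod>i\<in>supp h. ?f i) = \<gamma> (supp h) * rfun \<gamma> \<alpha> h"
    unfolding rfun_def using gpos by simp
  also have "\<dots> \<le> ?G * M"
    using gpos gG hr rfun_pos(1)[where \<gamma>=\<gamma> and \<alpha>=\<alpha>, OF hI assms(4)] by (intro mult_mono) auto
  finally have fj: "?f j \<le> ?G * M" .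
  have "\<bar>real_of_int (h j)\<bar> = (?f j) powr (1 / \<alpha>)"
    using assms(3) by (simp add: powr_powr)
  also have "\<dots> \<le> (?G * M) powr (1 / \<alpha>)"
    using fj assms(3) by (intro powr_mono2) auto
  also have "\<dots> \<le> real_of_int \<lceil>(?G * M) powr (1 / \<alpha>)\<rceil>" by simp
  finally show ?thesis by linarith
qed

theorem lemma5:
  fixes d :: nat and \<alpha> M :: real and \<gamma> :: "nat set \<Rightarrow> real"
  assumes "d \<ge> 1" and "\<alpha> > 1" and "M > 0"
    and "\<And>u. finite u \<Longrightarrow> u \<subseteq> {1..} \<Longrightarrow> \<gamma> u > 0"
    and "\<gamma> {} = 1"
  shows "finite (index_set d \<gamma> \<alpha> M)
      \<and> (\<forall>q. q > 1 / \<alpha> \<longrightarrow> real (card (index_set d \<gamma> \<alpha> M)) \<le> M powr q * C1 d q \<alpha> \<gamma>)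
      \<and> (M \<ge> 1 \<longrightarrow> real (card (index_set d \<gamma> \<alpha> M)) \<ge> (\<gamma> {1} * M) powr (1 / \<alpha>))"
proof -
  define A where "A = index_set d \<gamma> \<alpha> M"
  define N where "N = nat \<lceil>(Max (\<gamma> ` Pow {1..d}) * M) powr (1 / \<alpha>)\<rceil>"
  have a0: "\<alpha> > 0" using assms(2) by simp
  have bnd: "\<And>h j. h \<in> A \<Longrightarrow> j \<in> supp h \<Longrightarrow> \<bar>h j\<bar> \<le> int N"
    unfolding A_def N_def by (rule coord_bound[where \<gamma>=\<gamma>]) (simp_all add: a0 assms(4))
  have hI: "\<And>h. h \<in> A \<Longrightarrow> h \<in> intvecs d" and hr: "\<And>h. h \<in> A \<Longrightarrow> rfun \<gamma> \<alpha> h \<le> M"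
    unfolding A_def index_set_def by auto
  have finA: "finite A"
  proof (rule finite_subset)
    show "A \<subseteq> (\<lambda>f j. if j \<in> {1..d} then f j else 0) ` PiE {1..d} (\<lambda>_. {-int N..int N})"
    proof
      fix h assume h: "h \<in> A"
      have "h = (\<lambda>j. if j \<in> {1..d} then restrict h {1..d} j else 0)"
        using hI[OF h] by (auto simp: intvecs_def)
      moreover have "restrict h {1..d} \<in> PiE {1..d} (\<lambda>_. {-int N..int N})"
      proof -
        have "h j \<in> {-int N..int N}" for j
        proof (cases "h j = 0")
          case False
          then have "j \<in> supp h" by (simp add: supp_def)
          then show ?thesis using bnd[OF h] by fastforce
        qed simp
        then show ?thesis by auto
      qed
      ultimately show "h \<in> (\<lambda>f j. if j \<in> {1..d} then f j else 0) ` PiE {1..d} (\<lambda>_. {-int N..int N})"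
        by blast
    qed
  qed (simp add: finite_PiE)
  have upper: "real (card A) \<le> M powr q * C1 d q \<alpha> \<gamma>" if q: "q > 1 / \<alpha>" for q
  proof -
    have q0: "q > 0" using q a0 by (smt (verit) divide_pos_pos)
    have s1: "\<alpha> * q > 1" using q a0 by (simp add: divide_less_eq mult.commute)
    define T where "T h = rfun \<gamma> \<alpha> h powr (-q)" for h
    define g where "g k = \<bar>real_of_int k\<bar> powr (-(\<alpha> * q))" for k
    have rpos: "\<And>h. h \<in> A \<Longrightarrow> rfun \<gamma> \<alpha> h > 0"
      using rfun_pos(1)[where \<gamma>=\<gamma> and \<alpha>=\<alpha>] hI assms(4) by blast
    have "real (card A) = (\<Sum>h\<in>A. 1)" by simp
    also have "\<dots> \<le> (\<Sum>h\<in>A. M powr q * T h)"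
    proof (rule sum_mono)
      fix h assume h: "h \<in> A"
      have r0: "rfun \<gamma> \<alpha> h > 0" using rpos[OF h] .
      have "M / rfun \<gamma> \<alpha> h \<ge> 1" using r0 hr[OF h] by simp
      then have "(M / rfun \<gamma> \<alpha> h) powr q \<ge> 1" using q0 by (intro ge_one_powr_ge_zero) auto
      also have "(M / rfun \<gamma> \<alpha> h) powr q = M powr q * T h"
        using r0 assms(3) by (simp add: T_def powr_divide powr_minus_divide)
      finally show "1 \<le> M powr q * T h" .
    qed
    also have "\<dots> = M powr q * (\<Sum>h\<in>A. T h)" by (simp add: sum_distrib_left)
    finally have c1: "real (card A) \<le> M powr q * (\<Sum>h\<in>A. T h)" .
    have "(\<Sum>h\<in>A. T h) = (\<Sum>u\<in>supp ` A. \<Sum>h\<in>{h\<in>A. supp h = u}. T h)"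
      by (rule sum.image_gen[OF finA])
    also have "\<dots> \<le> (\<Sum>u\<in>Pow {1..d}. \<Sum>h\<in>{h\<in>A. supp h = u}. T h)"
      using supp_intvecs hI by (intro sum_mono2) (auto simp: T_def intro!: sum_nonneg)
    also have "\<dots> \<le> (\<Sum>u\<in>Pow {1..d}. \<gamma> u powr q * (2 * zeta (\<alpha> * q)) ^ card u)"
    proof (rule sum_mono)
      fix u assume u: "u \<in> Pow {1..d}"
      then have finu: "finite u" using finite_subset[of u "{1..d}"] by auto
      define S where "S = {h\<in>A. supp h = u}"
      have finS: "finite S" using finA by (simp add: S_def)
      have Teq: "T h = \<gamma> u powr q * (\<Prod>j\<in>u. g (h j))" if h: "h \<in> S" for h
      proof -
        have hs: "supp h = u" and hA: "h \<in> A" using h by (auto simp: S_def)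
        have gp: "\<gamma> u > 0" using rfun_pos(2)[where \<gamma>=\<gamma>, OF hI[OF hA]] assms(4) hs by auto
        have "T h = (inverse (\<gamma> u) * (\<Prod>j\<in>u. \<bar>real_of_int (h j)\<bar> powr \<alpha>)) powr (-q)"
          by (simp add: T_def rfun_def hs)
        also have "\<dots> = inverse (\<gamma> u) powr (-q) * (\<Prod>j\<in>u. \<bar>real_of_int (h j)\<bar> powr \<alpha>) powr (-q)"
          using gp by (intro powr_mult; auto intro: prod_nonneg)
        also have "inverse (\<gamma> u) powr (-q) = \<gamma> u powr q"
          using gp by (simp add: inverse_powr powr_minus)
        also have "(\<Prod>j\<in>u. \<bar>real_of_int (h j)\<bar> powr \<alpha>) powr (-q) = (\<Prod>j\<in>u. g (h j))"
          by (simp add: prod_powr_distrib powr_powr g_def)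
        finally show ?thesis .
      qed
      have "(\<Sum>h\<in>S. T h) = \<gamma> u powr q * (\<Sum>h\<in>S. \<Prod>j\<in>u. g (h j))"
        by (simp add: Teq sum_distrib_left)
      also have "(\<Sum>h\<in>S. \<Prod>j\<in>u. g (h j)) = (\<Sum>f\<in>(\<lambda>h. restrict h u) ` S. \<Prod>j\<in>u. g (f j))"
      proof -
        have "inj_on (\<lambda>h. restrict h u) S"
        proof (rule inj_onI)
          fix h h' assume "h \<in> S" "h' \<in> S" and e: "restrict h u = restrict h' u"
          then have "supp h = u" "supp h' = u" by (auto simp: S_def)
          show "h = h'"
          proof
            fix x show "h x = h' x"
            proof (cases "x \<in> u")
              case True then show ?thesis using fun_cong[OF e, of x] by simp
            next
              case False
              then have "x \<notin> supp h" "x \<notin> supp h'" using \<open>supp h = u\<close> \<open>supp h' = u\<close> by simp_all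
              then show ?thesis unfolding supp_def by simp
            qed
          qed
        qed
        then have "(\<Sum>f\<in>(\<lambda>h. restrict h u) ` S. \<Prod>j\<in>u. g (f j)) = (\<Sum>h\<in>S. \<Prod>j\<in>u. g (restrict h u j))"
          by (simp add: sum.reindex)
        also have "\<dots> = (\<Sum>h\<in>S. \<Prod>j\<in>u. g (h j))" by (intro sum.cong prod.cong) auto
        finally show ?thesis by simp
      qed
      also have "\<dots> \<le> (\<Sum>f\<in>PiE u (\<lambda>_. KK N). \<Prod>j\<in>u. g (f j))"
      proof (rule sum_mono2)
        show "finite (PiE u (\<lambda>_. KK N))" using finu by (simp add: finite_PiE KK_finite)
        show "(\<lambda>h. restrict h u) ` S \<subseteq> PiE u (\<lambda>_. KK N)"
        proof
          fix f assume "f \<in> (\<lambda>h. restrict h u) ` S"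
          then obtain h where h: "h \<in> S" and f: "f = restrict h u" by blast
          have "h j \<in> KK N" if "j \<in> u" for j
          proof -
            have "j \<in> supp h" using h that by (simp add: S_def)
            then show ?thesis using bnd h by (intro KK_mem) (auto simp: S_def supp_def)
          qed
          then show "f \<in> PiE u (\<lambda>_. KK N)" using f by auto
        qed
      qed (intro prod_nonneg, simp add: g_def)
      also have "\<dots> = (\<Prod>j\<in>u. \<Sum>k\<in>KK N. g k)"
        using prod_sum_PiE[of u "\<lambda>_. KK N" "\<lambda>_. g", OF finu] KK_finite by simp
      also have "\<dots> \<le> (\<Prod>j\<in>u. 2 * zeta (\<alpha> * q))"
        using KK_sum[OF s1] by (intro prod_mono) (auto simp: g_def intro!: sum_nonneg)
      also have "\<dots> = (2 * zeta (\<alpha> * q)) ^ card u" by simp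
      finally have "(\<Sum>h\<in>S. T h) \<le> \<gamma> u powr q * (2 * zeta (\<alpha> * q)) ^ card u"
        by (simp add: mult_left_mono)
      then show "(\<Sum>h\<in>{h\<in>A. supp h = u}. T h) \<le> \<gamma> u powr q * (2 * zeta (\<alpha> * q)) ^ card u"
        by (simp add: S_def)
    qed
    finally have "(\<Sum>h\<in>A. T h) \<le> C1 d q \<alpha> \<gamma>" by (simp add: C1_def)
    then show ?thesis using c1 assms(3) by (smt (verit) mult_left_mono powr_ge_zero)
  qed
  have lower: "real (card A) \<ge> (\<gamma> {1} * M) powr (1 / \<alpha>)" if M1: "M \<ge> 1"
  proof -
    define x where "x = (\<gamma> {1} * M) powr (1 / \<alpha>)"
    define m where "m = nat \<lfloor>x\<rfloor>"
    have g1: "\<gamma> {1} > 0" using assms(4)[of "{1}"] by auto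
    have x0: "x \<ge> 0" by (simp add: x_def)
    have xa: "x powr \<alpha> = \<gamma> {1} * M"
      using g1 assms(3) a0 by (simp add: x_def powr_powr)
    define e where "e k = (\<lambda>j::nat. if j = 1 then int k else 0)" for k :: nat
    have inj: "inj_on e {0..m}"
    proof (rule inj_onI)
      fix k k' assume "e k = e k'"
      then have "e k 1 = e k' 1" by simp
      then show "k = k'" by (simp add: e_def)
    qed
    have sub: "e ` {0..m} \<subseteq> A"
    proof
      fix h assume "h \<in> e ` {0..m}"
      then obtain k where k: "k \<le> m" and h: "h = e k" by auto
      have hI': "h \<in> intvecs d" using assms(1) by (auto simp: intvecs_def h e_def)
      have "rfun \<gamma> \<alpha> h \<le> M"
      proof (cases "k = 0")
        case True
        then have "supp h = {}" by (simp add: supp_def h e_def)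
        then show ?thesis using assms(5) M1 by (simp add: rfun_def)
      next
        case False
        then have sh: "supp h = {1}" by (auto simp: supp_def h e_def)
        have "real k \<le> x" using k x0 unfolding m_def by linarith
        then have "real k powr \<alpha> \<le> x powr \<alpha>" using a0 by (intro powr_mono2) auto
        then have kb: "real k powr \<alpha> \<le> \<gamma> {1} * M" using xa by simp
        have "rfun \<gamma> \<alpha> h = inverse (\<gamma> {1}) * real k powr \<alpha>"
          unfolding rfun_def sh by (simp add: h e_def)
        also have "\<dots> \<le> inverse (\<gamma> {1}) * (\<gamma> {1} * M)"
          using kb g1 by (intro mult_left_mono) auto
        also have "\<dots> = M" using g1 by simp
        finally show ?thesis .
      qed
      then show "h \<in> A" using hI' by (simp add: A_def index_set_def)
    qed
    have "card (e ` {0..m}) \<le> card A" by (rule card_mono[OF finA sub])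
    then have "m + 1 \<le> card A" using inj by (simp add: card_image)
    moreover have "x \<le> real m + 1" using x0 unfolding m_def by linarith
    ultimately show ?thesis unfolding x_def by linarith
  qed
  show ?thesis using finA upper lower unfolding A_def by blast
qed

end
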